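(* Let $(M,d)$ be a complete metric space and $X\subseteq M$ compact. Assume that every $\mu\in P(X)$ admits a barycenter in $M$, that $Y=conv(X)$ is compact, and that at least one variance maximizing $\mu\in P(X)$ has a unique barycenter. Then the circumcenter of $X$ in $M$, which lies in $Y$, is unique.
   Context: $P(\cdot)$ denotes Borel probability measures. $Var(\mu)=\inf_{y\in M}\int_X d^2(x,y)\,d\mu(x)$, a barycenter of $\mu$ is a point of $M$ attaining this infimum, and a variance maximizing measure is a maximizer of $Var$ over $P(X)$. $conv(X)$ is the set of all barycenters of measures in $P(X)$. The circumradius of $X$ is $R=\inf_{y\in M}\sup_{x\in X}d(x,y)$, and a circumcenter of $X$ is a point $y\in M$ with $X\subseteq\bar B(y,R)$, where $\bar B(y,R)$ is the closed ball of radius $R$ about $y$. *)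

theory Defs
  imports "HOL-Probability.Probability"
begin

text \<open>The complete metric space (M,d) is the whole type 'a (class metric_space + complete_space).
  P(X): Borel probability measures on M concentrated on X.\<close>

definition probs :: "'a::metric_space set \<Rightarrow> 'a measure set" where
  "probs X = {\<mu>. prob_space \<mu> \<and> sets \<mu> = sets borel \<and> emeasure \<mu> X = 1}"

definition var_at :: "'a::metric_space measure \<Rightarrow> 'a \<Rightarrow> real" where
  "var_at \<mu> y = (\<integral>x. (dist x y)\<^sup>2 \<partial>\<mu>)"

definition Var :: "'a::metric_space measure \<Rightarrow> real" where
  "Var \<mu> = (INF y. var_at \<mu> y)"

definition barycenter :: "'a::metric_space measure \<Rightarrow> 'a \<Rightarrow> bool" where
  "barycenter \<mu> y \<longleftrightarrow> var_at \<mu> y = Var \<mu>"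

definition var_max :: "'a::metric_space set \<Rightarrow> 'a measure \<Rightarrow> bool" where
  "var_max X \<mu> \<longleftrightarrow> \<mu> \<in> probs X \<and> (\<forall>\<nu>\<in>probs X. Var \<nu> \<le> Var \<mu>)"

definition conv_bary :: "'a::metric_space set \<Rightarrow> 'a set" where
  "conv_bary X = {y. \<exists>\<mu>\<in>probs X. barycenter \<mu> y}"

definition circumradius :: "'a::metric_space set \<Rightarrow> real" where
  "circumradius X = (INF y. SUP x\<in>X. dist x y)"

definition circumcenter :: "'a::metric_space set \<Rightarrow> 'a \<Rightarrow> bool" where
  "circumcenter X y \<longleftrightarrow> X \<subseteq> cball y (circumradius X)"

end

theory Submission
  imports Defs
begin

lemma probs_AE:
  assumes "\<nu> \<in> probs X" "compact X"
  shows "AE x in \<nu>. x \<in> X"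
proof -
  have p: "prob_space \<nu>" and s: "sets \<nu> = sets borel" and e: "emeasure \<nu> X = 1"
    using assms(1) by (auto simp: probs_def)
  have "measure \<nu> X = 1" using e by (simp add: measure_def)
  then show ?thesis using prob_space.AE_prob_1[OF p] by blast
qed

lemma compact_dist_bound:
  fixes X :: "'a::metric_space set"
  assumes "compact X"
  shows "\<exists>D. \<forall>x\<in>X. dist x y \<le> D"
proof -
  have "bounded X" using assms compact_imp_bounded by blast
  then obtain D where "\<forall>x\<in>X. dist y x \<le> D" using bounded_any_center by blast
  then show ?thesis by (metis dist_commute)
qed

lemma probs_integrable:
  fixes X :: "'a::metric_space set"
  assumes "\<nu> \<in> probs X" "compact X"
  shows "integrable \<nu> (\<lambda>x. (dist x y)\<^sup>2)"
proof -
  have p: "prob_space \<nu>" and s: "sets \<nu> = sets borel"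
    using assms(1) by (auto simp: probs_def)
  obtain D where D: "\<forall>x\<in>X. dist x y \<le> D" using compact_dist_bound[OF assms(2)] by blast
  have "AE x in \<nu>. norm ((dist x y)\<^sup>2) \<le> D\<^sup>2"
    using probs_AE[OF assms] D by (auto intro!: power_mono)
  moreover have "(\<lambda>x. (dist x y)\<^sup>2) \<in> borel_measurable \<nu>"
    unfolding measurable_cong_sets[OF s refl] by (intro borel_measurable_continuous_onI continuous_intros)
  ultimately show ?thesis
    by (rule finite_measure.integrable_const_bound[OF prob_space.finite_measure[OF p]])
qed

lemma var_at_nonneg: "0 \<le> var_at \<nu> y"
  unfolding var_at_def by (intro integral_nonneg_AE) auto

lemma var_at_le:
  fixes X :: "'a::metric_space set"
  assumes "\<nu> \<in> probs X" "compact X" "\<forall>x\<in>X. (dist x y)\<^sup>2 \<le> B"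
  shows "var_at \<nu> y \<le> B"
proof -
  have p: "prob_space \<nu>" using assms(1) by (auto simp: probs_def)
  have "var_at \<nu> y \<le> (\<integral>x. B \<partial>\<nu>)"
    unfolding var_at_def
    using probs_AE[OF assms(1,2)] assms(3)
    by (intro integral_mono_AE probs_integrable[OF assms(1,2)])
       (auto simp: finite_measure.integrable_const p prob_space.finite_measure)
  also have "\<dots> = B" using p by (simp add: prob_space.prob_space)
  finally show ?thesis .
qed

lemma Var_le: "Var \<nu> \<le> var_at \<nu> y"
  unfolding Var_def by (rule cINF_lower) (auto intro: bdd_belowI[where m=0] var_at_nonneg)

lemma var_at_lip:
  fixes X :: "'a::metric_space set"
  assumes "\<nu> \<in> probs X" "compact X" "\<forall>x\<in>X. dist x z \<le> D"
  shows "\<bar>var_at \<nu> y - var_at \<nu> z\<bar> \<le> dist y z * (2 * D + dist y z)"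
proof -
  have p: "prob_space \<nu>" using assms(1) by (auto simp: probs_def)
  have "var_at \<nu> y - var_at \<nu> z = (\<integral>x. (dist x y)\<^sup>2 - (dist x z)\<^sup>2 \<partial>\<nu>)"
    unfolding var_at_def using probs_integrable[OF assms(1,2)] by simp
  then have "\<bar>var_at \<nu> y - var_at \<nu> z\<bar> \<le> (\<integral>x. \<bar>(dist x y)\<^sup>2 - (dist x z)\<^sup>2\<bar> \<partial>\<nu>)"
    using integral_norm_bound[of \<nu> "\<lambda>x. (dist x y)\<^sup>2 - (dist x z)\<^sup>2"] by simp
  also have "\<dots> \<le> (\<integral>x. dist y z * (2 * D + dist y z) \<partial>\<nu>)"
  proof (intro integral_mono_AE)
    show "integrable \<nu> (\<lambda>x. \<bar>(dist x y)\<^sup>2 - (dist x z)\<^sup>2\<bar>)"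
      using probs_integrable[OF assms(1,2)] by auto
    show "integrable \<nu> (\<lambda>x. dist y z * (2 * D + dist y z))"
      by (simp add: finite_measure.integrable_const p prob_space.finite_measure)
    show "AE x in \<nu>. \<bar>(dist x y)\<^sup>2 - (dist x z)\<^sup>2\<bar> \<le> dist y z * (2 * D + dist y z)"
      using probs_AE[OF assms(1,2)]
    proof eventually_elim
      case (elim x)
      have dz: "dist x z \<le> D" using elim assms(3) by auto
      have t1: "\<bar>dist x y - dist x z\<bar> \<le> dist y z"
        by (smt (verit) dist_commute dist_triangle)
      have t2: "dist x y + dist x z \<le> 2 * D + dist y z"
        using dz by (smt (verit) dist_commute dist_triangle)
      have "(dist x y)\<^sup>2 - (dist x z)\<^sup>2 = (dist x y - dist x z) * (dist x y + dist x z)"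
        by (simp add: power2_eq_square algebra_simps)
      then have "\<bar>(dist x y)\<^sup>2 - (dist x z)\<^sup>2\<bar> = \<bar>dist x y - dist x z\<bar> * (dist x y + dist x z)"
        by (metis abs_mult abs_of_nonneg add_nonneg_nonneg zero_le_dist)
      also have "\<dots> \<le> dist y z * (2 * D + dist y z)"
        using t1 t2 by (intro mult_mono) auto
      finally show ?case .
    qed
  qed
  also have "\<dots> = dist y z * (2 * D + dist y z)" using p by (simp add: prob_space.prob_space)
  finally show ?thesis .
qed

definition mix :: "'a::metric_space measure \<Rightarrow> 'a \<Rightarrow> real \<Rightarrow> 'a measure" where
  "mix \<mu> x t = measure_pmf (bernoulli_pmf t) \<bind> (\<lambda>b. if b then return borel x else \<mu>)"

lemma mix_props:
  fixes X :: "'a::metric_space set"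
  assumes mu: "\<mu> \<in> probs X" and cX: "compact X" and xX: "x \<in> X" and t0: "0 \<le> t" and t1: "t \<le> 1"
  shows "mix \<mu> x t \<in> probs X"
    and "var_at (mix \<mu> x t) y = t * (dist x y)\<^sup>2 + (1 - t) * var_at \<mu> y"
proof -
  have p: "prob_space \<mu>" and s: "sets \<mu> = sets borel" and e: "emeasure \<mu> X = 1"
    using mu by (auto simp: probs_def)
  define K where "K = (\<lambda>b. if b then return borel x else \<mu>)"
  have Kmeas: "K \<in> measurable (measure_pmf (bernoulli_pmf t)) (subprob_algebra borel)"
    using p s by (simp add: K_def space_subprob_algebra subprob_space_return prob_space_imp_subprob_space)
  have ne: "space (measure_pmf (bernoulli_pmf t)) \<noteq> {}" by simp
  have sK: "sets (K b) = sets borel" for b using s by (auto simp: K_def)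
  have sm: "sets (mix \<mu> x t) = sets borel"
    unfolding mix_def K_def[symmetric] by (rule sets_bind[OF _ ne]) (simp add: sK)
  have em: "emeasure (mix \<mu> x t) A = ennreal t * indicator A x + ennreal (1 - t) * emeasure \<mu> A"
    if A: "A \<in> sets borel" for A
  proof -
    have "emeasure (mix \<mu> x t) A = (\<integral>\<^sup>+b. emeasure (K b) A \<partial>measure_pmf (bernoulli_pmf t))"
      unfolding mix_def K_def[symmetric] by (rule emeasure_bind[OF ne Kmeas A])
    also have "\<dots> = emeasure (K True) A * ennreal t + emeasure (K False) A * ennreal (1 - t)"
      using t0 t1 by (simp only: nn_integral_bernoulli_pmf zero_le)
    also have "\<dots> = ennreal t * indicator A x + ennreal (1 - t) * emeasure \<mu> A"
      using A by (simp add: K_def emeasure_return mult.commute)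
    finally show ?thesis .
  qed
  have spm: "space (mix \<mu> x t) = UNIV" using sets_eq_imp_space_eq[OF sm] by simp
  have "emeasure (mix \<mu> x t) UNIV = 1"
  proof -
    have "emeasure \<mu> UNIV = 1" using p sets_eq_imp_space_eq[OF s] prob_space.emeasure_space_1 by fastforce
    then have "emeasure (mix \<mu> x t) UNIV = ennreal t + ennreal (1 - t)" using em[of UNIV] by simp
    also have "\<dots> = 1" using t0 t1 by (subst ennreal_plus[symmetric]) auto
    finally show ?thesis .
  qed
  then have pm: "prob_space (mix \<mu> x t)" using spm by (intro prob_spaceI) simp
  have Xb: "X \<in> sets borel" using cX by (simp add: compact_imp_closed borel_closed)
  have "emeasure (mix \<mu> x t) X = ennreal t + ennreal (1 - t)" using em[OF Xb] e xX by simp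
  also have "\<dots> = 1" using t0 t1 by (subst ennreal_plus[symmetric]) auto
  finally show mp: "mix \<mu> x t \<in> probs X" using pm sm by (simp add: probs_def)
  have meas: "(\<lambda>z. (dist z y)\<^sup>2) \<in> borel_measurable borel"
    by (intro borel_measurable_continuous_onI continuous_intros)
  have "var_at (mix \<mu> x t) y = enn2real (\<integral>\<^sup>+z. ennreal ((dist z y)\<^sup>2) \<partial>mix \<mu> x t)"
    unfolding var_at_def by (rule integral_eq_nn_integral) (auto simp: measurable_cong_sets[OF sm refl] meas)
  also have "(\<integral>\<^sup>+z. ennreal ((dist z y)\<^sup>2) \<partial>mix \<mu> x t)
      = (\<integral>\<^sup>+b. (\<integral>\<^sup>+z. ennreal ((dist z y)\<^sup>2) \<partial>K b) \<partial>measure_pmf (bernoulli_pmf t))"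
    unfolding mix_def K_def[symmetric] by (rule nn_integral_bind[OF _ Kmeas]) (simp add: meas)
  also have "\<dots> = (\<integral>\<^sup>+z. ennreal ((dist z y)\<^sup>2) \<partial>K True) * ennreal t
        + (\<integral>\<^sup>+z. ennreal ((dist z y)\<^sup>2) \<partial>K False) * ennreal (1 - t)"
    using t0 t1 by (simp only: nn_integral_bernoulli_pmf zero_le)
  also have "(\<integral>\<^sup>+z. ennreal ((dist z y)\<^sup>2) \<partial>K True) = ennreal ((dist x y)\<^sup>2)"
    unfolding K_def by (simp add: nn_integral_return meas)
  also have "(\<integral>\<^sup>+z. ennreal ((dist z y)\<^sup>2) \<partial>K False) = ennreal (var_at \<mu> y)"
    unfolding K_def var_at_def by (simp add: nn_integral_eq_integral probs_integrable[OF mu cX])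
  also have "ennreal ((dist x y)\<^sup>2) * ennreal t + ennreal (var_at \<mu> y) * ennreal (1 - t)
      = ennreal (t * (dist x y)\<^sup>2 + (1 - t) * var_at \<mu> y)"
  proof -
    have a: "ennreal ((dist x y)\<^sup>2) * ennreal t = ennreal (t * (dist x y)\<^sup>2)"
      using t0 by (metis ennreal_mult mult.commute zero_le_power2)
    have b: "ennreal (var_at \<mu> y) * ennreal (1 - t) = ennreal ((1 - t) * var_at \<mu> y)"
      using t1 var_at_nonneg[of \<mu> y] by (metis ennreal_mult mult.commute diff_ge_0_iff_ge)
    show ?thesis unfolding a b
      using t0 t1 var_at_nonneg[of \<mu> y] by (intro ennreal_plus[symmetric]) auto
  qed
  finally show "var_at (mix \<mu> x t) y = t * (dist x y)\<^sup>2 + (1 - t) * var_at \<mu> y"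
    using t0 t1 var_at_nonneg[of \<mu> y] by (metis enn2real_ennreal add_nonneg_nonneg mult_nonneg_nonneg zero_le_power2 diff_ge_0_iff_ge)
qed

theorem corollary3p3:
  fixes X :: "'a::{metric_space,complete_space} set"
  assumes "compact X"
    and "\<forall>\<mu>\<in>probs X. \<exists>y. barycenter \<mu> y"
    and "compact (conv_bary X)"
    and "\<exists>\<mu>. var_max X \<mu> \<and> (\<exists>!y. barycenter \<mu> y)"
  shows "(\<exists>!y. circumcenter X y) \<and> (\<forall>y. circumcenter X y \<longrightarrow> y \<in> conv_bary X)"
proof -
  note cX = assms(1)
  obtain \<mu> where vm: "var_max X \<mu>" and ex1: "\<exists>!y. barycenter \<mu> y" using assms(4) by blast
  obtain b where bb: "barycenter \<mu> b" and uq: "\<And>y. barycenter \<mu> y \<Longrightarrow> y = b"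
    using ex1 by blast
  have mu: "\<mu> \<in> probs X" and vmax: "\<And>\<nu>. \<nu> \<in> probs X \<Longrightarrow> Var \<nu> \<le> Var \<mu>"
    using vm by (auto simp: var_max_def)
  have Xne: "X \<noteq> {}"
  proof
    assume "X = {}"
    then have "emeasure \<mu> X = 0" by simp
    then show False using mu by (simp add: probs_def)
  qed
  define V where "V = Var \<mu>"
  have Vb: "var_at \<mu> b = V" using bb by (simp add: barycenter_def V_def)
  have V0: "0 \<le> V" using Vb var_at_nonneg by metis
  have bary: "c = b" if "var_at \<mu> c \<le> V" for c
  proof -
    have "var_at \<mu> c = Var \<mu>" using that Var_le[of \<mu> c] by (simp add: V_def)
    then show ?thesis using uq barycenter_def by blast
  qed
  have key: "(dist x b)\<^sup>2 \<le> V" if xX: "x \<in> X" for x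
  proof -
    define t where "t = (\<lambda>n::nat. 1 / (real n + 2))"
    have tpos: "0 < t n" for n by (simp add: t_def)
    have tle: "t n \<le> 1" for n by (simp add: t_def)
    have "\<forall>n. \<exists>y. barycenter (mix \<mu> x (t n)) y"
      using assms(2) mix_props(1)[OF mu cX xX] tpos tle by (meson less_imp_le)
    then obtain yy where yy: "\<And>n. barycenter (mix \<mu> x (t n)) (yy n)" by metis
    have yin: "yy n \<in> conv_bary X" for n
      using yy[of n] mix_props(1)[OF mu cX xX less_imp_le[OF tpos] tle] by (auto simp: conv_bary_def)
    have ineq: "(1 - t n) * (dist x (yy n))\<^sup>2 \<le> V \<and> (1 - t n) * var_at \<mu> (yy n) \<le> V" for n
    proof -
      let ?d = "(dist x (yy n))\<^sup>2" and ?w = "var_at \<mu> (yy n)" and ?t = "t n"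
      have "var_at (mix \<mu> x ?t) (yy n) = Var (mix \<mu> x ?t)" using yy[of n] by (simp add: barycenter_def)
      also have "\<dots> \<le> V" unfolding V_def
        by (rule vmax, rule mix_props(1)[OF mu cX xX less_imp_le[OF tpos] tle])
      finally have h1: "?t * ?d + (1 - ?t) * ?w \<le> V"
        using mix_props(2)[OF mu cX xX less_imp_le[OF tpos] tle] by simp
      have h2: "V \<le> ?w" unfolding V_def by (rule Var_le)
      have "?t * ?d \<le> ?t * ?w" using h1 h2 by (simp add: algebra_simps)
      then have dw: "?d \<le> ?w" using tpos[of n] by simp
      have "(1 - ?t) * ?d \<le> (1 - ?t) * ?w" using dw tle[of n] by (intro mult_left_mono) auto
      moreover have "(1 - ?t) * ?w \<le> V" using h1 tpos[of n]
        by (smt (verit) mult_nonneg_nonneg zero_le_power2)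
      ultimately show ?thesis by linarith
    qed
    obtain l r where lin: "l \<in> conv_bary X" and r: "strict_mono r" and lim: "(yy \<circ> r) \<longlonglongrightarrow> l"
      using assms(3) yin unfolding compact_eq_seq_compact_metric seq_compact_def by metis
    have lim': "(\<lambda>n. yy (r n)) \<longlonglongrightarrow> l" using lim by (simp add: o_def)
    obtain D where D: "\<forall>z\<in>X. dist z l \<le> D" using compact_dist_bound[OF cX] by blast
    have t0: "t \<longlonglongrightarrow> 0"
    proof (rule Lim_null_comparison[OF _ LIMSEQ_inverse_real_of_nat])
      show "\<forall>\<^sub>F n in sequentially. norm (t n) \<le> inverse (real (Suc n))"
        by (intro always_eventually allI) (simp add: t_def divide_simps)
    qed
    have tr: "(\<lambda>n. t (r n)) \<longlonglongrightarrow> 0" using LIMSEQ_subseq_LIMSEQ[OF t0 r] by (simp add: o_def)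
    have dl0: "(\<lambda>n. dist (yy (r n)) l) \<longlonglongrightarrow> 0"
      using tendsto_dist[OF lim' tendsto_const[of l]] by simp
    have g0: "(\<lambda>n. dist (yy (r n)) l * (2 * D + dist (yy (r n)) l)) \<longlonglongrightarrow> 0"
      using tendsto_mult[OF dl0 tendsto_add[OF tendsto_const dl0]] by simp
    have "(\<lambda>n. var_at \<mu> (yy (r n)) - var_at \<mu> l) \<longlonglongrightarrow> 0"
      by (rule Lim_null_comparison[OF _ g0])
         (auto intro!: always_eventually var_at_lip[OF mu cX D])
    then have vl: "(\<lambda>n. var_at \<mu> (yy (r n))) \<longlonglongrightarrow> var_at \<mu> l"
      by (rule LIM_zero_cancel)
    have "(\<lambda>n. (1 - t (r n)) * var_at \<mu> (yy (r n))) \<longlonglongrightarrow> (1 - 0) * var_at \<mu> l"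
      by (intro tendsto_intros tr vl)
    then have A: "(\<lambda>n. (1 - t (r n)) * var_at \<mu> (yy (r n))) \<longlonglongrightarrow> var_at \<mu> l" by simp
    have "var_at \<mu> l \<le> V"
      by (rule LIMSEQ_le_const2[OF A]) (use ineq in blast)
    then have lb: "l = b" by (rule bary)
    have "(\<lambda>n. (1 - t (r n)) * (dist x (yy (r n)))\<^sup>2) \<longlonglongrightarrow> (1 - 0) * (dist x l)\<^sup>2"
      by (intro tendsto_intros tr lim')
    then have B: "(\<lambda>n. (1 - t (r n)) * (dist x (yy (r n)))\<^sup>2) \<longlonglongrightarrow> (dist x l)\<^sup>2" by simp
    have "(dist x l)\<^sup>2 \<le> V"
      by (rule LIMSEQ_le_const2[OF B]) (use ineq in blast)
    then show ?thesis using lb by simp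
  qed
  have kb: "dist x b \<le> sqrt V" if "x \<in> X" for x
    using key[OF that] by (rule real_le_rsqrt)
  define S where "S = (\<lambda>y. SUP x\<in>X. dist x y)"
  have bddS: "bdd_above ((\<lambda>x. dist x y) ` X)" for y
    using compact_dist_bound[OF cX, of y] by (auto intro: bdd_aboveI2)
  have Sge: "dist x y \<le> S y" if "x \<in> X" for x y
    unfolding S_def using that bddS by (intro cSUP_upper)
  have S0: "0 \<le> S y" for y using Xne Sge by (metis all_not_in_conv order_trans zero_le_dist)
  have Vle: "V \<le> (S y)\<^sup>2" for y
  proof -
    have "V \<le> var_at \<mu> y" unfolding V_def by (rule Var_le)
    also have "\<dots> \<le> (S y)\<^sup>2"
      by (rule var_at_le[OF mu cX]) (auto intro: power_mono Sge)
    finally show ?thesis .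
  qed
  have Sb: "S b \<le> sqrt V"
    unfolding S_def using Xne kb by (intro cSUP_least) auto
  have R: "circumradius X = sqrt V"
  proof (rule antisym)
    have "circumradius X \<le> S b"
      unfolding circumradius_def S_def[symmetric]
      by (rule cINF_lower) (auto intro: bdd_belowI[where m=0] S0)
    then show "circumradius X \<le> sqrt V" using Sb by linarith
    show "sqrt V \<le> circumradius X"
      unfolding circumradius_def S_def[symmetric]
    proof (rule cINF_greatest)
      fix y
      have "sqrt V \<le> sqrt ((S y)\<^sup>2)" using Vle by (rule real_sqrt_le_mono)
      then show "sqrt V \<le> S y" using S0[of y] by simp
    qed simp
  qed
  have cb: "circumcenter X b"
    unfolding circumcenter_def R using kb
    by (auto simp: dist_commute)
  have cu: "c = b" if "circumcenter X c" for c
  proof (rule bary)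
    have d: "dist x c \<le> sqrt V" if "x \<in> X" for x
      using \<open>circumcenter X c\<close> that unfolding circumcenter_def R by (auto simp: dist_commute)
    show "var_at \<mu> c \<le> V"
    proof (rule var_at_le[OF mu cX], intro ballI)
      fix x assume "x \<in> X"
      have "(dist x c)\<^sup>2 \<le> (sqrt V)\<^sup>2" using d[OF \<open>x \<in> X\<close>] by (intro power_mono) auto
      then show "(dist x c)\<^sup>2 \<le> V" using V0 by simp
    qed
  qed
  have "b \<in> conv_bary X" using bb mu by (auto simp: conv_bary_def)
  then show ?thesis using cb cu by blast
qed

end
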